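(* Let $\sigma$ be a signature containing $\triangleright$ and let $\mathcal{A}$ be a $\sigma$-algebra that is representable by partial functions. Then $\lhd$ is completely left-distributive over meets: for every nonempty $S\subseteq\mathcal{A}$ such that $\bigwedge S$ exists and every $a\in\mathcal{A}$, $\bigwedge\{a\lhd s:s\in S\}$ exists and equals $a\lhd\bigwedge S$.
   Context: Signatures $\sigma$ are sets of operation symbols drawn from: $\triangleright$ (antidomain restriction), $;$ (composition), $\wedge$ (intersection), $\mathrm{upd}$ (update), $\sqcup$ (preferential union), $\mathsf{D}$ (domain), $\mathsf{A}$ (antidomain), interpreted on partial functions as: $f \triangleright g = \{(x,y) \in g : x \notin \mathrm{dom}(f)\}$; $f;g$ = relational composition ($f$ first); $f\wedge g = f\cap g$; $\mathrm{upd}(f,g)(x)$ is $f(x)$ if $f(x)$ defined and $g(x)$ undefined, $g(x)$ if both defined, undefined otherwise; $(f\sqcup g)(x)$ is $f(x)$ if defined, else $g(x)$; $\mathsf{D}(f)$ = identity on $\mathrm{dom}(f)$; $\mathsf{A}(f)$ = identity on the complement of $\mathrm{dom}(f)$ in the base. $\mathcal{A}$ is representable if isomorphic to a $\sigma$-algebra of partial functions with these operations. Define $0 := a\triangleright a$, $a\lhd b := (a\triangleright b)\triangleright b$ (restriction of $b$ to the domain of $a$), $a \le b :\iff a\lhd b = a$; meets are taken in the poset $(\mathcal{A},\le)$. *)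

theory Defs
  imports Main
begin

datatype opsym =
    ARestr   \<comment> \<open>antidomain restriction, written \<open>\<triangleright>\<close>\<close>
  | Comp
  | Inter
  | Upd
  | Pref
  | Dom
  | Antidom

type_synonym signature = "opsym set"

text \<open>A sigma-algebra: a carrier with interpretations of the binary symbols
(ARestr, Comp, Inter, Upd, Pref) and unary symbols (Dom, Antidom).
Only the interpretations of symbols in sigma are relevant.\<close>

record 'a alg =
  car :: "'a set"
  bop :: "opsym \<Rightarrow> 'a \<Rightarrow> 'a \<Rightarrow> 'a"
  uop :: "opsym \<Rightarrow> 'a \<Rightarrow> 'a"

definition binary_syms :: "opsym set" where
  "binary_syms = {ARestr, Comp, Inter, Upd, Pref}"

definition unary_syms :: "opsym set" where
  "unary_syms = {Dom, Antidom}"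

definition is_sigma_alg :: "signature \<Rightarrow> 'a alg \<Rightarrow> bool" where
  "is_sigma_alg \<sigma> \<A> \<longleftrightarrow>
     (\<forall>op\<in>\<sigma> \<inter> binary_syms. \<forall>x\<in>car \<A>. \<forall>y\<in>car \<A>. bop \<A> op x y \<in> car \<A>) \<and>
     (\<forall>op\<in>\<sigma> \<inter> unary_syms. \<forall>x\<in>car \<A>. uop \<A> op x \<in> car \<A>)"

type_synonym 'b pfun = "'b \<Rightarrow> 'b option"

definition pf_arestr :: "'b pfun \<Rightarrow> 'b pfun \<Rightarrow> 'b pfun" where
  "pf_arestr f g = (\<lambda>x. if f x = None then g x else None)"

definition pf_comp :: "'b pfun \<Rightarrow> 'b pfun \<Rightarrow> 'b pfun" where
  "pf_comp f g = (\<lambda>x. case f x of None \<Rightarrow> None | Some y \<Rightarrow> g y)"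

definition pf_inter :: "'b pfun \<Rightarrow> 'b pfun \<Rightarrow> 'b pfun" where
  "pf_inter f g = (\<lambda>x. if f x = g x then f x else None)"

definition pf_upd :: "'b pfun \<Rightarrow> 'b pfun \<Rightarrow> 'b pfun" where
  "pf_upd f g = (\<lambda>x. if f x = None then None else if g x = None then f x else g x)"

definition pf_pref :: "'b pfun \<Rightarrow> 'b pfun \<Rightarrow> 'b pfun" where
  "pf_pref f g = (\<lambda>x. case f x of None \<Rightarrow> g x | Some y \<Rightarrow> Some y)"

definition pf_dom :: "'b pfun \<Rightarrow> 'b pfun" where
  "pf_dom f = (\<lambda>x. if f x = None then None else Some x)"

definition pf_antidom :: "'b set \<Rightarrow> 'b pfun \<Rightarrow> 'b pfun" where
  "pf_antidom X f = (\<lambda>x. if x \<in> X \<and> f x = None then Some x else None)"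

fun pf_bop :: "opsym \<Rightarrow> 'b pfun \<Rightarrow> 'b pfun \<Rightarrow> 'b pfun" where
  "pf_bop ARestr = pf_arestr"
| "pf_bop Comp = pf_comp"
| "pf_bop Inter = pf_inter"
| "pf_bop Upd = pf_upd"
| "pf_bop Pref = pf_pref"
| "pf_bop _ = (\<lambda>f g. Map.empty)"

fun pf_uop :: "'b set \<Rightarrow> opsym \<Rightarrow> 'b pfun \<Rightarrow> 'b pfun" where
  "pf_uop X Dom = pf_dom"
| "pf_uop X Antidom = pf_antidom X"
| "pf_uop X _ = (\<lambda>f. Map.empty)"

definition representation ::
  "signature \<Rightarrow> 'a alg \<Rightarrow> 'b set \<Rightarrow> ('a \<Rightarrow> 'b pfun) \<Rightarrow> bool" where
  "representation \<sigma> \<A> X h \<longleftrightarrow>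
     inj_on h (car \<A>) \<and>
     (\<forall>x\<in>car \<A>. dom (h x) \<subseteq> X \<and> ran (h x) \<subseteq> X) \<and>
     (\<forall>op\<in>\<sigma> \<inter> binary_syms. \<forall>x\<in>car \<A>. \<forall>y\<in>car \<A>.
        h (bop \<A> op x y) = pf_bop op (h x) (h y)) \<and>
     (\<forall>op\<in>\<sigma> \<inter> unary_syms. \<forall>x\<in>car \<A>.
        h (uop \<A> op x) = pf_uop X op (h x))"

definition representable_over ::
  "'b itself \<Rightarrow> signature \<Rightarrow> 'a alg \<Rightarrow> bool" where
  "representable_over _ \<sigma> \<A> \<longleftrightarrow> (\<exists>(X::'b set) h. representation \<sigma> \<A> X h)"

definition arestr :: "'a alg \<Rightarrow> 'a \<Rightarrow> 'a \<Rightarrow> 'a" where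
  "arestr \<A> a b = bop \<A> ARestr a b"

definition restr :: "'a alg \<Rightarrow> 'a \<Rightarrow> 'a \<Rightarrow> 'a" where
  "restr \<A> a b = arestr \<A> (arestr \<A> a b) b"   \<comment> \<open>\<open>a \<lhd> b\<close>\<close>

definition leq :: "'a alg \<Rightarrow> 'a \<Rightarrow> 'a \<Rightarrow> bool" where
  "leq \<A> a b \<longleftrightarrow> restr \<A> a b = a"

definition is_meet :: "'a alg \<Rightarrow> 'a set \<Rightarrow> 'a \<Rightarrow> bool" where
  "is_meet \<A> S m \<longleftrightarrow> m \<in> car \<A> \<and> (\<forall>s\<in>S. leq \<A> m s) \<and>
     (\<forall>l\<in>car \<A>. (\<forall>s\<in>S. leq \<A> l s) \<longrightarrow> leq \<A> l m)"

end

theory Submission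
  imports Defs
begin

lemma restr_in:
  assumes "ARestr \<in> \<sigma>" "is_sigma_alg \<sigma> \<A>" "x \<in> car \<A>" "y \<in> car \<A>"
  shows "restr \<A> x y \<in> car \<A>"
proof -
  have "\<forall>x\<in>car \<A>. \<forall>y\<in>car \<A>. bop \<A> ARestr x y \<in> car \<A>"
    using assms(1,2) unfolding is_sigma_alg_def binary_syms_def by auto
  thus ?thesis using assms(3,4) unfolding restr_def arestr_def by auto
qed

lemma h_restr:
  assumes "ARestr \<in> \<sigma>" "is_sigma_alg \<sigma> \<A>" "representation \<sigma> \<A> X h"
    "x \<in> car \<A>" "y \<in> car \<A>"
  shows "h (restr \<A> x y) = (\<lambda>z. if h x z = None then None else h y z)"
proof -
  have cl: "\<forall>x\<in>car \<A>. \<forall>y\<in>car \<A>. bop \<A> ARestr x y \<in> car \<A>"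
    using assms(1,2) unfolding is_sigma_alg_def binary_syms_def by auto
  have hb: "\<forall>x\<in>car \<A>. \<forall>y\<in>car \<A>. h (bop \<A> ARestr x y) = pf_arestr (h x) (h y)"
    using assms(1,3) unfolding representation_def binary_syms_def by auto
  have "h (restr \<A> x y) = pf_arestr (pf_arestr (h x) (h y)) (h y)"
    unfolding restr_def arestr_def using cl hb assms(4,5) by simp
  thus ?thesis by (auto simp: pf_arestr_def)
qed

lemma leq_iff:
  assumes "ARestr \<in> \<sigma>" "is_sigma_alg \<sigma> \<A>" "representation \<sigma> \<A> X h"
    "x \<in> car \<A>" "y \<in> car \<A>"
  shows "leq \<A> x y \<longleftrightarrow> h x \<subseteq>\<^sub>m h y"
proof -
  have inj: "inj_on h (car \<A>)" using assms(3) unfolding representation_def by auto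
  have "leq \<A> x y \<longleftrightarrow> h (restr \<A> x y) = h x"
    unfolding leq_def using inj restr_in[OF assms(1,2,4,5)] assms(4)
    by (metis inj_on_eq_iff)
  also have "\<dots> \<longleftrightarrow> h x \<subseteq>\<^sub>m h y"
    unfolding h_restr[OF assms]
  proof
    assume e: "(\<lambda>z. if h x z = None then None else h y z) = h x"
    show "h x \<subseteq>\<^sub>m h y" unfolding map_le_def
    proof
      fix z assume "z \<in> dom (h x)"
      hence "h x z \<noteq> None" by auto
      moreover have "(if h x z = None then None else h y z) = h x z" using fun_cong[OF e, of z] by simp
      ultimately show "h x z = h y z" by (simp split: if_splits)
    qed
  next
    assume le: "h x \<subseteq>\<^sub>m h y"
    show "(\<lambda>z. if h x z = None then None else h y z) = h x"
    proof
      fix z show "(if h x z = None then None else h y z) = h x z"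
      proof (cases "h x z = None")
        case False
        hence "z \<in> dom (h x)" by auto
        with le show ?thesis using False unfolding map_le_def by auto
      qed simp
    qed
  qed
  finally show ?thesis .
qed

theorem lemma5p8:
  fixes \<sigma> :: signature and \<A> :: "'a alg"
  assumes "ARestr \<in> \<sigma>"
    and "is_sigma_alg \<sigma> \<A>"
    and "representable_over TYPE('b) \<sigma> \<A>"
    and "S \<subseteq> car \<A>" and "S \<noteq> {}"
    and "is_meet \<A> S m"
    and "a \<in> car \<A>"
  shows "is_meet \<A> ((\<lambda>s. restr \<A> a s) ` S) (restr \<A> a m)"
proof -
  obtain X :: "'b set" and h where rep: "representation \<sigma> \<A> X h"
    using assms(3) unfolding representable_over_def by auto
  note L = leq_iff[OF assms(1,2) rep]
  note R = h_restr[OF assms(1,2) rep]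
  note C = restr_in[OF assms(1,2)]
  have mc: "m \<in> car \<A>" using assms(6) unfolding is_meet_def by blast
  have mlb: "\<forall>s\<in>S. leq \<A> m s" using assms(6) unfolding is_meet_def by blast
  have mgl: "\<forall>l\<in>car \<A>. (\<forall>s\<in>S. leq \<A> l s) \<longrightarrow> leq \<A> l m"
    using assms(6) unfolding is_meet_def by blast
  have ms: "h m \<subseteq>\<^sub>m h s" if s: "s \<in> S" for s
  proof -
    have sc: "s \<in> car \<A>" using s assms(4) by blast
    have "leq \<A> m s" using mlb s by blast
    thus ?thesis using L[OF mc sc] by blast
  qed
  have mg: "h l \<subseteq>\<^sub>m h m" if lc: "l \<in> car \<A>" and H: "\<forall>s\<in>S. h l \<subseteq>\<^sub>m h s" for l
  proof -
    have "\<forall>s\<in>S. leq \<A> l s"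
    proof
      fix s assume s: "s \<in> S"
      have sc: "s \<in> car \<A>" using s assms(4) by blast
      show "leq \<A> l s" using L[OF lc sc] H s by blast
    qed
    hence "leq \<A> l m" using mgl lc by blast
    thus ?thesis using L[OF lc mc] by blast
  qed
  have am: "restr \<A> a m \<in> car \<A>" using C[OF assms(7) mc] .
  have Ram: "h (restr \<A> a m) = (\<lambda>z. if h a z = None then None else h m z)"
    using R[OF assms(7) mc] .
  show ?thesis unfolding is_meet_def
  proof (intro conjI ballI impI)
    show "restr \<A> a m \<in> car \<A>" by (rule am)
  next
    fix t assume "t \<in> (\<lambda>s. restr \<A> a s) ` S"
    then obtain s where s: "s \<in> S" "t = restr \<A> a s" by blast
    have sc: "s \<in> car \<A>" using s assms(4) by blast
    have Ras: "h (restr \<A> a s) = (\<lambda>z. if h a z = None then None else h s z)"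
      using R[OF assms(7) sc] .
    have le: "h m \<subseteq>\<^sub>m h s" using ms[OF s(1)] .
    have "h (restr \<A> a m) \<subseteq>\<^sub>m h (restr \<A> a s)"
      unfolding Ras Ram map_le_def
    proof
      fix z assume z: "z \<in> dom (\<lambda>z. if h a z = None then None else h m z)"
      show "(if h a z = None then None else h m z) = (if h a z = None then None else h s z)"
      proof (cases "h a z = None")
        case False
        hence "h m z \<noteq> None" using z by (auto simp: dom_def)
        hence "h m z = h s z" using le unfolding map_le_def by blast
        thus ?thesis by simp
      qed simp
    qed
    hence "leq \<A> (restr \<A> a m) (restr \<A> a s)" using L[OF am C[OF assms(7) sc]] by blast
    thus "leq \<A> (restr \<A> a m) t" using s(2) by simp
  next
    fix l assume lc: "l \<in> car \<A>" and lb: "\<forall>t\<in>(\<lambda>s. restr \<A> a s) ` S. leq \<A> l t"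
    have ls: "h l \<subseteq>\<^sub>m (\<lambda>z. if h a z = None then None else h s z)" if s: "s \<in> S" for s
    proof -
      have sc: "s \<in> car \<A>" using s assms(4) by blast
      have "leq \<A> l (restr \<A> a s)" using lb s by blast
      hence "h l \<subseteq>\<^sub>m h (restr \<A> a s)" using L[OF lc C[OF assms(7) sc]] by blast
      thus ?thesis using R[OF assms(7) sc] by simp
    qed
    have pt: "h l z = h s z \<and> h a z \<noteq> None" if s: "s \<in> S" and z: "h l z \<noteq> None" for s z
    proof -
      have "z \<in> dom (h l)" using z by blast
      hence e: "h l z = (if h a z = None then None else h s z)"
        using ls[OF s] unfolding map_le_def by blast
      show ?thesis
      proof (cases "h a z = None")
        case True thus ?thesis using e z by simp
      next
        case False thus ?thesis using e by (simp del: not_None_eq)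
      qed
    qed
    obtain s0 where s0: "s0 \<in> S" using assms(5) by blast
    have l2: "\<forall>s\<in>S. h l \<subseteq>\<^sub>m h s"
      unfolding map_le_def using pt by blast
    have lm: "h l \<subseteq>\<^sub>m h m" using mg[OF lc l2] .
    have "h l \<subseteq>\<^sub>m h (restr \<A> a m)" unfolding Ram map_le_def
    proof
      fix z assume z: "z \<in> dom (h l)"
      hence nz: "h l z \<noteq> None" by blast
      have "h a z \<noteq> None" using pt[OF s0 nz] by blast
      moreover have "h l z = h m z" using lm z unfolding map_le_def by blast
      ultimately show "h l z = (if h a z = None then None else h m z)" by (simp del: not_None_eq)
    qed
    thus "leq \<A> l (restr \<A> a m)" using L[OF lc am] by blast
  qed
qed

end
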